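(* An operator $\Lambda$ satisfies balanced treatment and non-arbitrariness if and only if $\Lambda$ is the historical operator $\Phi$, i.e., for every standard rule $R$, every historical claims problem $(N,c,E,h)$ and every $i\in N$, $$\Lambda_i(R)(N,c,E,h)=\min\{c_i,R_i(N,\widetilde{c},E)+\lambda\},$$ where $\lambda\in\mathbb{R}_+$ is such that $\sum_{i\in N}\min\{c_i,R_i(N,\widetilde{c},E)+\lambda\}=E$.
   Context: Agents are elements of $\mathbb{N}$; $N$ denotes a nonempty finite subset of $\mathbb{N}$. A (standard) claims problem is a triple $(N,c,E)$ with $c\in\mathbb{R}_+^N$, $E\in\mathbb{R}_+$, $C=\sum_{i\in N}c_i>0$ and $E\le C$. An allocation for it is $x\in\mathbb{R}^N$ with $0\le x_i\le c_i$ for all $i$ and $\sum_ix_i=E$. A standard rule $R$ assigns to each standard claims problem an allocation $R(N,c,E)$; $\mathcal{R}$ is the set of standard rules. A history for $N$ is a finite sequence $h=\{(c^{(t)},x^{(t)})\}_{t=1}^{|T|}$ where for each $t$, $c^{(t)}\in\mathbb{R}_+^N$ and $x^{(t)}$ is an allocation of $(N,c^{(t)},\sum_ix^{(t)}_i)$. A historical claims problem is $(N,c,E,h)$ with $(N,c,E)$ a standard claims problem and $h$ a history for $N$; its allocations are the allocations of $(N,c,E)$. A general rule assigns to each historical claims problem an allocation. An operator $\Lambda$ assigns to each standard rule $R$ a general rule $\Lambda(R)$. The history-adjusted claims are $\widetilde{c}_i=c_i+\sum_t(c^{(t)}_i-x^{(t)}_i)$. (A $\lambda\ge0$ as in the claim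 always exists, and the resulting vector does not depend on which such $\lambda$ is chosen, so the historical operator $\Phi$ is well defined.) Axioms on operators (required for every $R\in\mathcal{R}$ and every historical problem $(N,c,E,h)$): Balanced treatment: for each $i,j\in N$ with $\Lambda_i(R)(N,c,E,h)<c_i$ and $\Lambda_j(R)(N,c,E,h)<c_j$, $\Lambda_i(R)(N,c,E,h)-R_i(N,\widetilde{c},E)=\Lambda_j(R)(N,c,E,h)-R_j(N,\widetilde{c},E)$. Non-arbitrariness: for each $i\in N$ with $\Lambda_i(R)(N,c,E,h)=c_i$ and $R_i(N,\widetilde{c},E)<c_i$, we have $\Lambda_i(R)(N,c,E,h)-R_i(N,\widetilde{c},E)\le\Lambda_j(R)(N,c,E,h)-R_j(N,\widetilde{c},E)$ for all $j\in N$ with $\Lambda_j(R)(N,c,E,h)<c_j$. *)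

theory Defs
  imports Main "HOL.Real"
begin

text \<open>Claims vectors and allocations are functions nat => real; as a canonical
  representation of elements of R^N they are required to vanish outside N.\<close>

type_synonym vec = "nat \<Rightarrow> real"
type_synonym hist = "(vec \<times> vec) list"
type_synonym srule = "nat set \<Rightarrow> vec \<Rightarrow> real \<Rightarrow> vec"
type_synonym grule = "nat set \<Rightarrow> vec \<Rightarrow> real \<Rightarrow> hist \<Rightarrow> vec"

definition claims_problem :: "nat set \<Rightarrow> vec \<Rightarrow> real \<Rightarrow> bool" where
  "claims_problem N c E \<longleftrightarrow> finite N \<and> N \<noteq> {} \<and> (\<forall>i\<in>N. 0 \<le> c i) \<and>
     (\<forall>i. i \<notin> N \<longrightarrow> c i = 0) \<and> (\<Sum>i\<in>N. c i) > 0 \<and> 0 \<le> E \<and> E \<le> (\<Sum>i\<in>N. c i)"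

definition allocation :: "nat set \<Rightarrow> vec \<Rightarrow> real \<Rightarrow> vec \<Rightarrow> bool" where
  "allocation N c E x \<longleftrightarrow> (\<forall>i\<in>N. 0 \<le> x i \<and> x i \<le> c i) \<and>
     (\<forall>i. i \<notin> N \<longrightarrow> x i = 0) \<and> (\<Sum>i\<in>N. x i) = E"

definition standard_rule :: "srule \<Rightarrow> bool" where
  "standard_rule R \<longleftrightarrow> (\<forall>N c E. claims_problem N c E \<longrightarrow> allocation N c E (R N c E))"

definition is_history :: "nat set \<Rightarrow> hist \<Rightarrow> bool" where
  "is_history N h \<longleftrightarrow> (\<forall>(ct, xt) \<in> set h.
      claims_problem N ct (\<Sum>i\<in>N. xt i) \<and> allocation N ct (\<Sum>i\<in>N. xt i) xt)"

definition hist_problem :: "nat set \<Rightarrow> vec \<Rightarrow> real \<Rightarrow> hist \<Rightarrow> bool" where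
  "hist_problem N c E h \<longleftrightarrow> claims_problem N c E \<and> is_history N h"

definition general_rule :: "grule \<Rightarrow> bool" where
  "general_rule G \<longleftrightarrow> (\<forall>N c E h. hist_problem N c E h \<longrightarrow> allocation N c E (G N c E h))"

definition operator :: "(srule \<Rightarrow> grule) \<Rightarrow> bool" where
  "operator \<Lambda> \<longleftrightarrow> (\<forall>R. standard_rule R \<longrightarrow> general_rule (\<Lambda> R))"

definition adj_claims :: "vec \<Rightarrow> hist \<Rightarrow> vec" where
  "adj_claims c h = (\<lambda>i. c i + (\<Sum>p\<leftarrow>h. fst p i - snd p i))"

definition balanced_treatment :: "(srule \<Rightarrow> grule) \<Rightarrow> bool" where
  "balanced_treatment \<Lambda> \<longleftrightarrow> (\<forall>R N c E h. standard_rule R \<longrightarrow> hist_problem N c E h \<longrightarrow>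
     (\<forall>i\<in>N. \<forall>j\<in>N. \<Lambda> R N c E h i < c i \<longrightarrow> \<Lambda> R N c E h j < c j \<longrightarrow>
        \<Lambda> R N c E h i - R N (adj_claims c h) E i = \<Lambda> R N c E h j - R N (adj_claims c h) E j))"

definition non_arbitrariness :: "(srule \<Rightarrow> grule) \<Rightarrow> bool" where
  "non_arbitrariness \<Lambda> \<longleftrightarrow> (\<forall>R N c E h. standard_rule R \<longrightarrow> hist_problem N c E h \<longrightarrow>
     (\<forall>i\<in>N. \<Lambda> R N c E h i = c i \<longrightarrow> R N (adj_claims c h) E i < c i \<longrightarrow>
        (\<forall>j\<in>N. \<Lambda> R N c E h j < c j \<longrightarrow>
          \<Lambda> R N c E h i - R N (adj_claims c h) E i \<le> \<Lambda> R N c E h j - R N (adj_claims c h) E j)))"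

definition is_historical_operator :: "(srule \<Rightarrow> grule) \<Rightarrow> bool" where
  "is_historical_operator \<Lambda> \<longleftrightarrow> (\<forall>R N c E h. standard_rule R \<longrightarrow> hist_problem N c E h \<longrightarrow>
     (\<exists>lam::real. 0 \<le> lam \<and> (\<Sum>i\<in>N. min (c i) (R N (adj_claims c h) E i + lam)) = E \<and>
        (\<forall>i\<in>N. \<Lambda> R N c E h i = min (c i) (R N (adj_claims c h) E i + lam))))"

end

theory Submission
  imports Defs
begin

lemma hist_sum_props:
  assumes "is_history N h"
  shows "(i \<in> N \<longrightarrow> 0 \<le> (\<Sum>p\<leftarrow>h. fst p i - snd p i)) \<and> (i \<notin> N \<longrightarrow> (\<Sum>p\<leftarrow>h. fst p i - snd p i) = 0)"
  using assms
proof (induction h)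
  case Nil
  then show ?case by simp
next
  case (Cons a h)
  obtain ct xt where a: "a = (ct, xt)" by (cases a)
  have h: "is_history N h" using Cons.prems by (simp add: is_history_def)
  have cp: "claims_problem N ct (\<Sum>i\<in>N. xt i)" and al: "allocation N ct (\<Sum>i\<in>N. xt i) xt"
    using Cons.prems a by (auto simp: is_history_def)
  show ?case using Cons.IH[OF h] cp al a
    by (auto simp: claims_problem_def allocation_def)
qed

lemma adj_ok:
  assumes "hist_problem N c E h"
  shows "claims_problem N (adj_claims c h) E"
proof -
  have cp: "claims_problem N c E" and hh: "is_history N h" using assms by (auto simp: hist_problem_def)
  have ge: "\<And>i. i \<in> N \<Longrightarrow> c i \<le> adj_claims c h i"
    using hist_sum_props[OF hh] by (simp add: adj_claims_def)
  have "(\<Sum>i\<in>N. c i) \<le> (\<Sum>i\<in>N. adj_claims c h i)" by (rule sum_mono, rule ge)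
  moreover have "\<forall>i. i \<notin> N \<longrightarrow> adj_claims c h i = 0"
    using cp hist_sum_props[OF hh] by (simp add: claims_problem_def adj_claims_def)
  moreover have "\<forall>i\<in>N. 0 \<le> adj_claims c h i" using cp ge by (force simp: claims_problem_def)
  ultimately show ?thesis using cp unfolding claims_problem_def
    apply (elim conjE)
    apply (intro conjI)
    apply assumption+
    apply linarith
    apply assumption
    apply linarith
    done
qed

lemma core:
  fixes x r c :: vec
  assumes fin: "finite N"
    and xc: "\<forall>i\<in>N. x i \<le> c i"
    and sx: "(\<Sum>i\<in>N. x i) = E"
    and sr: "(\<Sum>i\<in>N. r i) = E"
    and r0: "\<forall>i\<in>N. 0 \<le> r i"
    and bt: "\<forall>i\<in>N. \<forall>j\<in>N. x i < c i \<longrightarrow> x j < c j \<longrightarrow> x i - r i = x j - r j"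
    and na: "\<forall>i\<in>N. x i = c i \<longrightarrow> r i < c i \<longrightarrow> (\<forall>j\<in>N. x j < c j \<longrightarrow> x i - r i \<le> x j - r j)"
  shows "\<exists>lam::real. 0 \<le> lam \<and> (\<Sum>i\<in>N. min (c i) (r i + lam)) = E \<and>
        (\<forall>i\<in>N. x i = min (c i) (r i + lam))"
proof (cases "\<exists>j\<in>N. x j < c j")
  case True
  then obtain j where j: "j \<in> N" "x j < c j" by blast
  define lam where "lam = x j - r j"
  have uns: "x k = r k + lam" if k: "k \<in> N" "x k < c k" for k
  proof -
    have "x k - r k = x j - r j" using bt k j by blast
    then show ?thesis unfolding lam_def by simp
  qed
  have sat: "c k - r k \<le> lam" if k: "k \<in> N" "x k = c k" "r k < c k" for k
  proof -
    have "x k - r k \<le> x j - r j" using na k j by blast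
    then show ?thesis using k unfolding lam_def by simp
  qed
  have l0: "0 \<le> lam"
  proof (rule ccontr)
    assume "\<not> 0 \<le> lam"
    hence neg: "lam < 0" by simp
    have le: "\<And>k. k \<in> N \<Longrightarrow> x k \<le> r k"
    proof -
      fix k assume k: "k \<in> N"
      show "x k \<le> r k"
      proof (cases "x k < c k")
        case True then show ?thesis using uns[OF k] neg by simp
      next
        case False
        hence xk: "x k = c k" using xc k by force
        show ?thesis
        proof (rule ccontr)
          assume "\<not> x k \<le> r k"
          then have "r k < c k" using xk by simp
          then show False using sat[OF k xk] neg by simp
        qed
      qed
    qed
    have "(\<Sum>i\<in>N. x i) < (\<Sum>i\<in>N. r i)"
    proof (rule sum_strict_mono_ex1[OF fin])
      show "\<forall>i\<in>N. x i \<le> r i" using le by blast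
      have "x j < r j" using uns[OF j] neg by simp
      then show "\<exists>a\<in>N. x a < r a" using j by blast
    qed
    then show False using sx sr by simp
  qed
  have eq: "\<forall>i\<in>N. x i = min (c i) (r i + lam)"
  proof
    fix i assume i: "i \<in> N"
    show "x i = min (c i) (r i + lam)"
    proof (cases "x i < c i")
      case True then show ?thesis using uns[OF i] by simp
    next
      case False
      hence "x i = c i" using xc i by force
      show ?thesis
      proof (cases "r i < c i")
        case True
        then have "c i \<le> r i + lam" using sat[OF i \<open>x i = c i\<close>] by simp
        then show ?thesis using \<open>x i = c i\<close> by simp
      next
        case False
        then have "c i \<le> r i + lam" using l0 by simp
        then show ?thesis using \<open>x i = c i\<close> by simp
      qed
    qed
  qed
  have "(\<Sum>i\<in>N. min (c i) (r i + lam)) = E" using sx eq by simp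
  then show ?thesis using l0 eq by blast
next
  case False
  hence xeq: "\<forall>i\<in>N. x i = c i" using xc by force
  define lam where "lam = (\<Sum>i\<in>N. \<bar>c i - r i\<bar>)"
  have big: "\<And>i. i \<in> N \<Longrightarrow> \<bar>c i - r i\<bar> \<le> lam"
    unfolding lam_def using fin by (intro member_le_sum) auto
  have l0: "0 \<le> lam" unfolding lam_def by (simp add: sum_nonneg)
  have eq: "\<forall>i\<in>N. x i = min (c i) (r i + lam)"
  proof
    fix i assume i: "i \<in> N"
    have "c i \<le> r i + lam" using big[OF i] by linarith
    then show "x i = min (c i) (r i + lam)" using xeq i by simp
  qed
  have "(\<Sum>i\<in>N. min (c i) (r i + lam)) = E" using sx eq by simp
  then show ?thesis using l0 eq by blast
qed

theorem theorem3:
  fixes \<Lambda> :: "srule \<Rightarrow> grule"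
  assumes "operator \<Lambda>"
  shows "balanced_treatment \<Lambda> \<and> non_arbitrariness \<Lambda> \<longleftrightarrow> is_historical_operator \<Lambda>"
proof
  assume A: "balanced_treatment \<Lambda> \<and> non_arbitrariness \<Lambda>"
  show "is_historical_operator \<Lambda>"
    unfolding is_historical_operator_def
  proof (intro allI impI)
    fix R N c E h
    assume R: "standard_rule R" and hp: "hist_problem N c E h"
    have ax: "allocation N c E (\<Lambda> R N c E h)"
      using assms R hp by (auto simp: operator_def general_rule_def)
    have ar: "allocation N (adj_claims c h) E (R N (adj_claims c h) E)"
      using R adj_ok[OF hp] by (auto simp: standard_rule_def)
    have fin: "finite N" using hp by (simp add: hist_problem_def claims_problem_def)
    show "\<exists>lam::real. 0 \<le> lam \<and> (\<Sum>i\<in>N. min (c i) (R N (adj_claims c h) E i + lam)) = E \<and>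
        (\<forall>i\<in>N. \<Lambda> R N c E h i = min (c i) (R N (adj_claims c h) E i + lam))"
    proof (rule core[OF fin])
      show "\<forall>i\<in>N. \<Lambda> R N c E h i \<le> c i" using ax by (simp add: allocation_def)
      show "(\<Sum>i\<in>N. \<Lambda> R N c E h i) = E" using ax by (simp add: allocation_def)
      show "(\<Sum>i\<in>N. R N (adj_claims c h) E i) = E" using ar by (simp add: allocation_def)
      show "\<forall>i\<in>N. 0 \<le> R N (adj_claims c h) E i" using ar by (simp add: allocation_def)
      show "\<forall>i\<in>N. \<forall>j\<in>N. \<Lambda> R N c E h i < c i \<longrightarrow> \<Lambda> R N c E h j < c j \<longrightarrow>
        \<Lambda> R N c E h i - R N (adj_claims c h) E i = \<Lambda> R N c E h j - R N (adj_claims c h) E j"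
        using A R hp unfolding balanced_treatment_def by blast
      show "\<forall>i\<in>N. \<Lambda> R N c E h i = c i \<longrightarrow> R N (adj_claims c h) E i < c i \<longrightarrow>
        (\<forall>j\<in>N. \<Lambda> R N c E h j < c j \<longrightarrow>
          \<Lambda> R N c E h i - R N (adj_claims c h) E i \<le> \<Lambda> R N c E h j - R N (adj_claims c h) E j)"
        using A R hp unfolding non_arbitrariness_def by blast
    qed
  qed
next
  assume H: "is_historical_operator \<Lambda>"
  show "balanced_treatment \<Lambda> \<and> non_arbitrariness \<Lambda>"
  proof
    show "balanced_treatment \<Lambda>"
      unfolding balanced_treatment_def
    proof (intro allI impI ballI)
      fix R N c E h i j
      assume R: "standard_rule R" and hp: "hist_problem N c E h" and i: "i \<in> N" and j: "j \<in> N"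
        and xi: "\<Lambda> R N c E h i < c i" and xj: "\<Lambda> R N c E h j < c j"
      obtain lam where l: "0 \<le> lam" "\<forall>i\<in>N. \<Lambda> R N c E h i = min (c i) (R N (adj_claims c h) E i + lam)"
        using H R hp unfolding is_historical_operator_def by blast
      show "\<Lambda> R N c E h i - R N (adj_claims c h) E i = \<Lambda> R N c E h j - R N (adj_claims c h) E j"
        using l(2) i j xi xj by (smt (verit))
    qed
  next
    show "non_arbitrariness \<Lambda>"
      unfolding non_arbitrariness_def
    proof (intro allI impI ballI)
      fix R N c E h i j
      assume R: "standard_rule R" and hp: "hist_problem N c E h" and i: "i \<in> N"
        and xi: "\<Lambda> R N c E h i = c i" and ri: "R N (adj_claims c h) E i < c i"
        and j: "j \<in> N" and xj: "\<Lambda> R N c E h j < c j"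
      obtain lam where l: "0 \<le> lam" "\<forall>i\<in>N. \<Lambda> R N c E h i = min (c i) (R N (adj_claims c h) E i + lam)"
        using H R hp unfolding is_historical_operator_def by blast
      show "\<Lambda> R N c E h i - R N (adj_claims c h) E i \<le> \<Lambda> R N c E h j - R N (adj_claims c h) E j"
        using l(2) i j xi xj by (smt (verit))
    qed
  qed
qed

end
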